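(* Let $\mathcal{S}$ be a relational schema, $\mathit{IC}$ a finite set of universal integrity constraints of the form $\forall \bar{x}(\bigwedge_{i=1}^{m} P_i(\bar{x}_i) \rightarrow \bigvee_{j=1}^{n} Q_j(\bar{y}_j) \vee \varphi)$, and $D$ a database instance (without nulls). Then the second-order sentence $\Phi(\Pi(\mathit{IC},D))$ associated to the repair program is logically equivalent to $$\mathcal{R}(D) \wedge \bigwedge_{P\in\mathcal{S}}\forall\bar x\big((P(\bar x)\vee P_{\mathbf{t}}(\bar x))\equiv P_\star(\bar x)\big)\wedge\bigwedge_{P\in\mathcal{S}}\forall\bar x\big((P_\star(\bar x)\wedge\neg P_{\mathbf{f}}(\bar x))\equiv P_{\star\star}(\bar x)\big)\wedge\bigwedge_{P\in\mathcal{S}}\forall\bar x\,\neg(P_{\mathbf{t}}(\bar x)\wedge P_{\mathbf{f}}(\bar x))\wedge \mathit{Circ}\big(\Theta;\{P_{\mathbf{t}},P_{\mathbf{f}}\mid P\in\mathcal{S}\};\{P_\star\mid P\in\mathcal{S}\}\big),$$ where $\Theta$ is the conjunction of the rules of types (1)–(3) of the repair program, each viewed as a first-order sentence, and $\mathit{Circ}$ denotes parallel circumscription.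
   Context: Repair program $\Pi(\mathit{IC},D)$: for each $P\in\mathcal{S}$ of arity $k$ there are new $k$-ary predicates $P_{\mathbf{t}}, P_{\mathbf{f}}, P_{\star}, P_{\star\star}$. Rules: (1) a fact $P(\bar a)$ for each $P(\bar a)\in D$; (2) for each constraint and each partition $Q'\cup Q''=\{Q_1,\ldots,Q_n\}$, $Q'\cap Q''=\emptyset$, the rule $\bigvee_{i=1}^m P_{i,\mathbf{f}}(\bar{x}_i)\vee\bigvee_{j=1}^n Q_{j,\mathbf{t}}(\bar y_j)\leftarrow \bigwedge_{i=1}^m P_{i,\star}(\bar x_i), \bigwedge_{Q_j\in Q'}Q_{j,\mathbf{f}}(\bar y_j), \bigwedge_{Q_k\in Q''}\mathit{not}\,Q_k(\bar y_k), \bar\varphi$, with $\bar\varphi$ a conjunction of built-ins equivalent to $\neg\varphi$; (3) $P_\star(\bar x)\leftarrow P(\bar x)$ and $P_\star(\bar x)\leftarrow P_{\mathbf{t}}(\bar x)$; (4) $P_{\star\star}(\bar x)\leftarrow P_\star(\bar x),\mathit{not}\,P_{\mathbf{f}}(\bar x)$; (5) program constraint $\leftarrow P_{\mathbf{t}}(\bar x),P_{\mathbf{f}}(\bar x)$. A rule is viewed as a first-order sentence by replacing commas with $\wedge$, $\mathit{not}$ with $\neg$, turning $\mathit{Head}\leftarrow\mathit{Body}$ into $\mathit{Body}\rightarrow\mathit{Head}$ and taking the universal closure; a constraint $\leftarrow B$ becomes $\neg B$. For a program $\Pi$, $\psi(\Pi)$ is the conjunction of these sentences. The SO sentence is $\Phi(\Pi):=\psi\wedge\neg\exists\bar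 X((\bar X<\bar P)\wedge\psi^\circ(\bar X))$, where $\bar P=(P_1,\ldots,P_n)$ lists the (non-built-in) predicates of $\psi$, $\bar X=(X^{P_1},\ldots,X^{P_n})$ are predicate variables of matching arities, $\bar X<\bar P$ means $\bigwedge_i\forall\bar x(X^{P_i}(\bar x)\rightarrow P_i(\bar x))\wedge\bigvee_i\exists\bar x(P_i(\bar x)\wedge\neg X^{P_i}(\bar x))$, and $\psi^\circ$ is defined recursively (with $\neg\chi$ written as $\chi\rightarrow\bot$): $P_i(\bar t)^\circ=X^{P_i}(\bar t)$; $(t_1=t_2)^\circ=(t_1=t_2)$ (built-ins unchanged); $\bot^\circ=\bot$; $(F\odot G)^\circ=F^\circ\odot G^\circ$ for $\odot\in\{\wedge,\vee\}$; $(F\rightarrow G)^\circ=(F^\circ\rightarrow G^\circ)\wedge(F\rightarrow G)$; $(\mathsf{Q}xF)^\circ=\mathsf{Q}xF^\circ$ for $\mathsf{Q}\in\{\forall,\exists\}$. The Herbrand models of $\Phi(\Pi)$ are the stable models of $\Pi$. $\mathcal{R}(D)$ (Reiter's reconstruction) is the conjunction of: the domain closure axiom $\forall x\bigvee_{c}x=c$ over the (active) domain constants; the unique names axioms $c\neq c'$ for distinct constants; and for each $P\in\mathcal{S}$ the completion $\forall\bar x(P(\bar x)\equiv\bigvee_{P(\bar a)\in D}\bar x=\bar a)$ (with empty disjunction $\bot$). Parallel circumscription: $\mathit{Circ}(\Sigma(\bar P,\bar Q);\bar P;\bar Q):=\Sigma(\bar P,\bar Q)\wedge\neg\exists\bar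 X\bar Y(\Sigma(\bar X,\bar Y)\wedge\bar X\le\bar P\wedge\bar X\neq\bar P)$, where $\bar X\le\bar P$ means $\bigwedge_i\forall\bar x(X_i(\bar x)\rightarrow P_i(\bar x))$; the predicates in $\bar Q$ vary, all others are fixed. *)

theory Defs
  imports Main
begin

datatype 'c trm = Var nat | Cst 'c

datatype ('r, 'b, 'c) fm =
    Atom 'r "'c trm list"
  | Eq "'c trm" "'c trm"
  | BI 'b "'c trm list"
  | Bot
  | Conj "('r,'b,'c) fm" "('r,'b,'c) fm"
  | Disj "('r,'b,'c) fm" "('r,'b,'c) fm"
  | Imp "('r,'b,'c) fm" "('r,'b,'c) fm"
  | All nat "('r,'b,'c) fm"
  | Ex nat "('r,'b,'c) fm"

definition Neg :: "('r,'b,'c) fm \<Rightarrow> ('r,'b,'c) fm" where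
  "Neg F = Imp F Bot"

definition Top :: "('r,'b,'c) fm" where
  "Top = Imp Bot Bot"

definition Iff :: "('r,'b,'c) fm \<Rightarrow> ('r,'b,'c) fm \<Rightarrow> ('r,'b,'c) fm" where
  "Iff F G = Conj (Imp F G) (Imp G F)"

fun conj_list :: "('r,'b,'c) fm list \<Rightarrow> ('r,'b,'c) fm" where
  "conj_list [] = Top"
| "conj_list [F] = F"
| "conj_list (F # Fs) = Conj F (conj_list Fs)"

fun disj_list :: "('r,'b,'c) fm list \<Rightarrow> ('r,'b,'c) fm" where
  "disj_list [] = Bot"
| "disj_list [F] = F"
| "disj_list (F # Fs) = Disj F (disj_list Fs)"

fun tvars :: "'c trm \<Rightarrow> nat set" where
  "tvars (Var n) = {n}"
| "tvars (Cst c) = {}"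

fun fv :: "('r,'b,'c) fm \<Rightarrow> nat set" where
  "fv (Atom P ts) = \<Union> (tvars ` set ts)"
| "fv (Eq t u) = tvars t \<union> tvars u"
| "fv (BI b ts) = \<Union> (tvars ` set ts)"
| "fv Bot = {}"
| "fv (Conj F G) = fv F \<union> fv G"
| "fv (Disj F G) = fv F \<union> fv G"
| "fv (Imp F G) = fv F \<union> fv G"
| "fv (All x F) = fv F - {x}"
| "fv (Ex x F) = fv F - {x}"

definition univ_close :: "('r,'b,'c) fm \<Rightarrow> ('r,'b,'c) fm" where
  "univ_close F = foldr All (sorted_list_of_set (fv F)) F"

definition xs :: "nat \<Rightarrow> 'c trm list" where
  "xs k = map Var [0..<k]"

definition all_tuple :: "nat \<Rightarrow> ('r,'b,'c) fm \<Rightarrow> ('r,'b,'c) fm" where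
  "all_tuple k F = foldr All [0..<k] F"

definition ex_tuple :: "nat \<Rightarrow> ('r,'b,'c) fm \<Rightarrow> ('r,'b,'c) fm" where
  "ex_tuple k F = foldr Ex [0..<k] F"

fun ren :: "('r \<Rightarrow> 's) \<Rightarrow> ('r,'b,'c) fm \<Rightarrow> ('s,'b,'c) fm" where
  "ren f (Atom P ts) = Atom (f P) ts"
| "ren f (Eq t u) = Eq t u"
| "ren f (BI b ts) = BI b ts"
| "ren f Bot = Bot"
| "ren f (Conj F G) = Conj (ren f F) (ren f G)"
| "ren f (Disj F G) = Disj (ren f F) (ren f G)"
| "ren f (Imp F G) = Imp (ren f F) (ren f G)"
| "ren f (All x F) = All x (ren f F)"
| "ren f (Ex x F) = Ex x (ren f F)"

section \<open>Semantics: Herbrand structures whose universe is the set of constants 'c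
  (constants denote themselves, so unique names hold); built-ins have a fixed
  interpretation B; = is true equality.\<close>

fun tval :: "(nat \<Rightarrow> 'c) \<Rightarrow> 'c trm \<Rightarrow> 'c" where
  "tval v (Var n) = v n"
| "tval v (Cst c) = c"

fun eval :: "('r \<Rightarrow> 'c list \<Rightarrow> bool) \<Rightarrow> ('b \<Rightarrow> 'c list \<Rightarrow> bool) \<Rightarrow> (nat \<Rightarrow> 'c)
              \<Rightarrow> ('r,'b,'c) fm \<Rightarrow> bool" where
  "eval I B v (Atom P ts) = I P (map (tval v) ts)"
| "eval I B v (Eq t u) = (tval v t = tval v u)"
| "eval I B v (BI b ts) = B b (map (tval v) ts)"
| "eval I B v Bot = False"
| "eval I B v (Conj F G) = (eval I B v F \<and> eval I B v G)"
| "eval I B v (Disj F G) = (eval I B v F \<or> eval I B v G)"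
| "eval I B v (Imp F G) = (eval I B v F \<longrightarrow> eval I B v G)"
| "eval I B v (All x F) = (\<forall>a. eval I B (v(x := a)) F)"
| "eval I B v (Ex x F) = (\<exists>a. eval I B (v(x := a)) F)"

definition holds :: "('r \<Rightarrow> 'c list \<Rightarrow> bool) \<Rightarrow> ('b \<Rightarrow> 'c list \<Rightarrow> bool) \<Rightarrow> ('r,'b,'c) fm \<Rightarrow> bool" where
  "holds I B F = (\<forall>v. eval I B v F)"

text \<open>Predicates of the repair program: P, P_t, P_f, P_star, P_starstar.\<close>
datatype 'p rp = Orig 'p | PT 'p | PF 'p | PS 'p | PSS 'p

fun base :: "'p rp \<Rightarrow> 'p" where
  "base (Orig P) = P" | "base (PT P) = P" | "base (PF P) = P" | "base (PS P) = P" | "base (PSS P) = P"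

text \<open>Built-in atoms and literals; phi is a disjunction of built-in literals
  (True = positive literal).\<close>
datatype ('b, 'c) batom = BEq "'c trm" "'c trm" | BRel 'b "'c trm list"

fun batom_fm :: "('b,'c) batom \<Rightarrow> ('r,'b,'c) fm" where
  "batom_fm (BEq t u) = Eq t u"
| "batom_fm (BRel b ts) = BI b ts"

text \<open>The complement of a built-in literal (conjunction of these is phi-bar, equivalent to not phi).\<close>
fun bneg :: "bool \<times> ('b,'c) batom \<Rightarrow> ('r,'b,'c) fm" where
  "bneg (True, a) = Neg (batom_fm a)"
| "bneg (False, a) = batom_fm a"

text \<open>Universal constraint  forall x (/\ P_i(x_i) --> \/ Q_j(y_j) \/ phi).\<close>
datatype ('p, 'b, 'c) ucon =
  UC (ante: "('p \<times> nat list) list") (cons: "('p \<times> nat list) list")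
     (phi: "(bool \<times> ('b,'c) batom) list")

definition vs :: "nat list \<Rightarrow> 'c trm list" where
  "vs x = map Var x"

definition facts :: "('p \<times> 'c list) list \<Rightarrow> ('p rp,'b,'c) fm list" where
  "facts D = map (\<lambda>f. Atom (Orig (fst f)) (map Cst (snd f))) D"

definition rule2 :: "('p,'b,'c) ucon \<Rightarrow> bool list \<Rightarrow> ('p rp,'b,'c) fm" where
  "rule2 c bs =
     (let qs = zip (cons c) bs;
          body = map (\<lambda>a. Atom (PS (fst a)) (vs (snd a))) (ante c)
               @ [Atom (PF (fst (fst q))) (vs (snd (fst q))). q \<leftarrow> qs, snd q]
               @ [Neg (Atom (Orig (fst (fst q))) (vs (snd (fst q)))). q \<leftarrow> qs, \<not> snd q]
               @ map bneg (phi c);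
          head = map (\<lambda>a. Atom (PF (fst a)) (vs (snd a))) (ante c)
               @ map (\<lambda>a. Atom (PT (fst a)) (vs (snd a))) (cons c)
      in univ_close (Imp (conj_list body) (disj_list head)))"

text \<open>One rule for each constraint and each partition Q' (marked True) / Q'' (marked False).\<close>
definition rules2 :: "('p,'b,'c) ucon list \<Rightarrow> ('p rp,'b,'c) fm list" where
  "rules2 IC = concat (map (\<lambda>c. map (rule2 c) (List.n_lists (length (cons c)) [True, False])) IC)"

definition rules3 :: "('p \<Rightarrow> nat) \<Rightarrow> 'p list \<Rightarrow> ('p rp,'b,'c) fm list" where
  "rules3 ar S = concat (map (\<lambda>P.
     [univ_close (Imp (conj_list [Atom (Orig P) (xs (ar P))]) (Atom (PS P) (xs (ar P)))),
      univ_close (Imp (conj_list [Atom (PT P) (xs (ar P))]) (Atom (PS P) (xs (ar P))))]) S)"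

definition rules4 :: "('p \<Rightarrow> nat) \<Rightarrow> 'p list \<Rightarrow> ('p rp,'b,'c) fm list" where
  "rules4 ar S = map (\<lambda>P.
     univ_close (Imp (conj_list [Atom (PS P) (xs (ar P)), Neg (Atom (PF P) (xs (ar P)))])
                     (Atom (PSS P) (xs (ar P))))) S"

definition rules5 :: "('p \<Rightarrow> nat) \<Rightarrow> 'p list \<Rightarrow> ('p rp,'b,'c) fm list" where
  "rules5 ar S = map (\<lambda>P.
     univ_close (Neg (conj_list [Atom (PT P) (xs (ar P)), Atom (PF P) (xs (ar P))]))) S"

text \<open>psi(Pi(IC,D)) and Theta (rules of types (1)-(3)).\<close>
definition psi :: "('p \<Rightarrow> nat) \<Rightarrow> 'p list \<Rightarrow> ('p,'b,'c) ucon list \<Rightarrow> ('p \<times> 'c list) list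
                     \<Rightarrow> ('p rp,'b,'c) fm" where
  "psi ar S IC D = conj_list (facts D @ rules2 IC @ rules3 ar S @ rules4 ar S @ rules5 ar S)"

definition Theta :: "('p \<Rightarrow> nat) \<Rightarrow> 'p list \<Rightarrow> ('p,'b,'c) ucon list \<Rightarrow> ('p \<times> 'c list) list
                     \<Rightarrow> ('p rp,'b,'c) fm" where
  "Theta ar S IC D = conj_list (facts D @ rules2 IC @ rules3 ar S)"

definition preds :: "'p list \<Rightarrow> 'p rp list" where
  "preds S = concat (map (\<lambda>P. [Orig P, PT P, PF P, PS P, PSS P]) S)"

text \<open>psi-circle; atoms over Inl are the original predicates, over Inr the predicate variables X.\<close>
fun circ :: "('r,'b,'c) fm \<Rightarrow> ('r + 'r,'b,'c) fm" where
  "circ (Atom P ts) = Atom (Inr P) ts"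
| "circ (Eq t u) = Eq t u"
| "circ (BI b ts) = BI b ts"
| "circ Bot = Bot"
| "circ (Conj F G) = Conj (circ F) (circ G)"
| "circ (Disj F G) = Disj (circ F) (circ G)"
| "circ (Imp F G) = Conj (Imp (circ F) (circ G)) (ren Inl (Imp F G))"
| "circ (All x F) = All x (circ F)"
| "circ (Ex x F) = Ex x (circ F)"

definition le_fm :: "('r \<Rightarrow> nat) \<Rightarrow> 'r list \<Rightarrow> ('r + 'r,'b,'c) fm" where
  "le_fm ar ps = conj_list (map (\<lambda>p. all_tuple (ar p)
       (Imp (Atom (Inr p) (xs (ar p))) (Atom (Inl p) (xs (ar p))))) ps)"

definition eq_fm :: "('r \<Rightarrow> nat) \<Rightarrow> 'r list \<Rightarrow> ('r + 'r,'b,'c) fm" where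
  "eq_fm ar ps = conj_list (map (\<lambda>p. all_tuple (ar p)
       (Iff (Atom (Inr p) (xs (ar p))) (Atom (Inl p) (xs (ar p))))) ps)"

definition less_fm :: "('r \<Rightarrow> nat) \<Rightarrow> 'r list \<Rightarrow> ('r + 'r,'b,'c) fm" where
  "less_fm ar ps = Conj (le_fm ar ps)
     (disj_list (map (\<lambda>p. ex_tuple (ar p)
       (Conj (Atom (Inl p) (xs (ar p))) (Neg (Atom (Inr p) (xs (ar p)))))) ps))"

definition rar :: "('p \<Rightarrow> nat) \<Rightarrow> 'p rp \<Rightarrow> nat" where
  "rar ar r = ar (base r)"

text \<open>Truth of Phi(Pi(IC,D)) in the structure I; the second-order quantifier over
  X-bar is the HOL quantifier over X.\<close>
definition Phi_holds :: "('p \<Rightarrow> nat) \<Rightarrow> 'p list \<Rightarrow> ('p,'b,'c) ucon list \<Rightarrow> ('p \<times> 'c list) list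
     \<Rightarrow> ('b \<Rightarrow> 'c list \<Rightarrow> bool) \<Rightarrow> ('p rp \<Rightarrow> 'c list \<Rightarrow> bool) \<Rightarrow> bool" where
  "Phi_holds ar S IC D B I =
     (holds I B (psi ar S IC D) \<and>
      \<not> (\<exists>X. holds (case_sum I X) B
               (Conj (less_fm (rar ar) (preds S)) (circ (psi ar S IC D)))))"

text \<open>Circ(Sg; Ps; Qs): Ps minimised, Qs varying, others fixed.  The predicate
  variables X-bar, Y-bar are the values of Z at Ps and Qs.\<close>
definition Circ_holds :: "('r \<Rightarrow> nat) \<Rightarrow> ('b \<Rightarrow> 'c list \<Rightarrow> bool) \<Rightarrow> ('r \<Rightarrow> 'c list \<Rightarrow> bool)
     \<Rightarrow> ('r,'b,'c) fm \<Rightarrow> 'r list \<Rightarrow> 'r list \<Rightarrow> bool" where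
  "Circ_holds ar B I Sg Ps Qs =
     (holds I B Sg \<and>
      \<not> (\<exists>Z. holds (case_sum I Z) B
               (Conj (ren (\<lambda>r. if r \<in> set Ps \<union> set Qs then Inr r else Inl r) Sg)
                 (Conj (le_fm ar Ps) (Neg (eq_fm ar Ps))))))"

definition R_fm :: "('p \<Rightarrow> nat) \<Rightarrow> 'p list \<Rightarrow> ('p \<times> ('c::enum) list) list \<Rightarrow> ('p rp,'b,'c) fm" where
  "R_fm ar S D =
     Conj (All 0 (disj_list (map (\<lambda>c. Eq (Var 0) (Cst c)) Enum.enum)))
     (Conj (conj_list [Neg (Eq (Cst c) (Cst d)). c \<leftarrow> Enum.enum, d \<leftarrow> Enum.enum, c \<noteq> d])
       (conj_list (map (\<lambda>P. all_tuple (ar P)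
           (Iff (Atom (Orig P) (xs (ar P)))
                (disj_list [conj_list (map (\<lambda>i. Eq (Var i) (Cst (snd f ! i))) [0..<ar P]).
                            f \<leftarrow> D, fst f = P]))) S)))"

definition RHS_holds :: "('p \<Rightarrow> nat) \<Rightarrow> 'p list \<Rightarrow> ('p,'b,'c::enum) ucon list \<Rightarrow> ('p \<times> 'c list) list
     \<Rightarrow> ('b \<Rightarrow> 'c list \<Rightarrow> bool) \<Rightarrow> ('p rp \<Rightarrow> 'c list \<Rightarrow> bool) \<Rightarrow> bool" where
  "RHS_holds ar S IC D B I =
     (holds I B (Conj (R_fm ar S D)
        (Conj (conj_list (map (\<lambda>P. all_tuple (ar P)
                 (Iff (Disj (Atom (Orig P) (xs (ar P))) (Atom (PT P) (xs (ar P))))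
                      (Atom (PS P) (xs (ar P))))) S))
        (Conj (conj_list (map (\<lambda>P. all_tuple (ar P)
                 (Iff (Conj (Atom (PS P) (xs (ar P))) (Neg (Atom (PF P) (xs (ar P)))))
                      (Atom (PSS P) (xs (ar P))))) S))
              (conj_list (map (\<lambda>P. all_tuple (ar P)
                 (Neg (Conj (Atom (PT P) (xs (ar P))) (Atom (PF P) (xs (ar P)))))) S)))))
      \<and> Circ_holds (rar ar) B I (Theta ar S IC D)
          (concat (map (\<lambda>P. [PT P, PF P]) S)) (map PS S))"

definition wf_db :: "('p \<Rightarrow> nat) \<Rightarrow> 'p list \<Rightarrow> ('p \<times> 'c list) list \<Rightarrow> bool" where
  "wf_db ar S D = (\<forall>f \<in> set D. fst f \<in> set S \<and> length (snd f) = ar (fst f))"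

definition wf_ic :: "('p \<Rightarrow> nat) \<Rightarrow> 'p list \<Rightarrow> ('p,'b,'c) ucon list \<Rightarrow> bool" where
  "wf_ic ar S IC = (\<forall>c \<in> set IC. \<forall>a \<in> set (ante c @ cons c).
                       fst a \<in> set S \<and> length (snd a) = ar (fst a))"

end

theory Submission
  imports Defs
begin


lemma eval_ren: "eval J B v (ren f F) = eval (\<lambda>r. J (f r)) B v F"
  by (induction F arbitrary: v) (auto simp: comp_def)

lemma eval_conj_list: "eval J B v (conj_list Fs) = (\<forall>F\<in>set Fs. eval J B v F)"
  by (induction Fs rule: conj_list.induct) (auto simp: Top_def)

lemma eval_disj_list: "eval J B v (disj_list Fs) = (\<exists>F\<in>set Fs. eval J B v F)"
  by (induction Fs rule: disj_list.induct) auto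

lemma eval_circ_conj_list: "eval J B v (circ (conj_list Fs)) = (\<forall>F\<in>set Fs. eval J B v (circ F))"
  by (induction Fs rule: conj_list.induct) (auto simp: Top_def)

lemma eval_circ_disj_list: "eval J B v (circ (disj_list Fs)) = (\<exists>F\<in>set Fs. eval J B v (circ F))"
  by (induction Fs rule: disj_list.induct) auto

lemma circ_foldr_All: "circ (foldr All l F) = foldr All l (circ F)"
  by (induction l) auto

lemma ren_foldr_All: "ren f (foldr All l F) = foldr All l (ren f F)"
  by (induction l) auto

lemma holds_All: "holds J B (All x F) = holds J B F"
  unfolding holds_def
proof (intro iffI allI)
  fix v assume "\<forall>v. eval J B v (All x F)"
  then have "\<forall>a. eval J B (v(x := a)) F" by simp
  then have "eval J B (v(x := v x)) F" by blast
  then show "eval J B v F" by simp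
next
  fix v assume "\<forall>v. eval J B v F"
  then show "eval J B v (All x F)" by simp
qed

lemma holds_foldr_All: "holds J B (foldr All l F) = holds J B F"
  by (induction l) (auto simp: holds_All)

lemma holds_univ_close: "holds J B (univ_close F) = holds J B F"
  by (simp add: univ_close_def holds_foldr_All)

lemma holds_circ_univ_close: "holds J B (circ (univ_close F)) = holds J B (circ F)"
  by (simp add: univ_close_def holds_foldr_All circ_foldr_All)

lemma holds_ren_univ_close: "holds J B (ren f (univ_close F)) = holds J B (ren f F)"
  by (simp add: univ_close_def holds_foldr_All ren_foldr_All)

lemma holds_conj_list: "holds J B (conj_list Fs) = (\<forall>F\<in>set Fs. holds J B F)"
  by (auto simp: holds_def eval_conj_list)

lemma holds_circ_conj_list: "holds J B (circ (conj_list Fs)) = (\<forall>F\<in>set Fs. holds J B (circ F))"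
  by (auto simp: holds_def eval_circ_conj_list)

lemma holds_Conj: "holds J B (Conj F G) = (holds J B F \<and> holds J B G)"
  by (auto simp: holds_def)

lemma map_tval_vs[simp]: "map (tval v) (vs x) = map v x"
  by (simp add: vs_def)

lemma map_tval_xs[simp]: "map (tval v) (xs k) = map v [0..<k]"
  by (simp add: xs_def)

lemma all_map_upt: "(\<forall>v. P (map v [0..<k])) = (\<forall>t. length t = k \<longrightarrow> P t)"
proof
  assume "\<forall>v. P (map v [0..<k])"
  show "\<forall>t. length t = k \<longrightarrow> P t"
  proof (intro allI impI)
    fix t :: "'a list" assume "length t = k"
    then have "map (\<lambda>i. t ! i) [0..<k] = t" using map_nth[of t] by simp
    then show "P t" using \<open>\<forall>v. P (map v [0..<k])\<close> by metis
  qed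
qed simp

lemma ex_map_upt: "(\<exists>v. P (map v [0..<k])) = (\<exists>t. length t = k \<and> P t)"
  using all_map_upt[of "\<lambda>t. \<not> P t" k] by blast

lemma eval_foldr_All: "eval J B v (foldr All l F) = (\<forall>w. eval J B (\<lambda>i. if i \<in> set l then w i else v i) F)"
proof (induction l arbitrary: v)
  case Nil then show ?case by simp
next
  case (Cons x l)
  show ?case
  proof
    assume H: "eval J B v (foldr All (x # l) F)"
    show "\<forall>w. eval J B (\<lambda>i. if i \<in> set (x # l) then w i else v i) F"
    proof
      fix w
      have "eval J B (\<lambda>i. if i \<in> set l then w i else (v(x := w x)) i) F"
        using H Cons by simp
      moreover have "(\<lambda>i. if i \<in> set l then w i else (v(x := w x)) i) = (\<lambda>i. if i \<in> set (x # l) then w i else v i)"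
        by auto
      ultimately show "eval J B (\<lambda>i. if i \<in> set (x # l) then w i else v i) F" by simp
    qed
  next
    assume H: "\<forall>w. eval J B (\<lambda>i. if i \<in> set (x # l) then w i else v i) F"
    show "eval J B v (foldr All (x # l) F)"
    proof (simp add: Cons, intro allI)
      fix a w
      have "eval J B (\<lambda>i. if i \<in> set (x # l) then (\<lambda>i. if i \<in> set l then w i else a) i else v i) F"
        using H by (rule allE)
      moreover have "(\<lambda>i. if i \<in> set (x # l) then (\<lambda>i. if i \<in> set l then w i else a) i else v i) = (\<lambda>i. if i \<in> set l then w i else (v(x := a)) i)"
        by auto
      ultimately show "eval J B (\<lambda>i. if i \<in> set l then w i else (v(x := a)) i) F" by simp
    qed
  qed
qed

lemma eval_foldr_Ex: "eval J B v (foldr Ex l F) = (\<exists>w. eval J B (\<lambda>i. if i \<in> set l then w i else v i) F)"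
proof (induction l arbitrary: v)
  case Nil then show ?case by simp
next
  case (Cons x l)
  show ?case
  proof
    assume "eval J B v (foldr Ex (x # l) F)"
    then obtain a w where H: "eval J B (\<lambda>i. if i \<in> set l then w i else (v(x := a)) i) F"
      using Cons by auto
    have "(\<lambda>i. if i \<in> set (x # l) then (\<lambda>i. if i \<in> set l then w i else a) i else v i) = (\<lambda>i. if i \<in> set l then w i else (v(x := a)) i)"
      by auto
    then show "\<exists>w. eval J B (\<lambda>i. if i \<in> set (x # l) then w i else v i) F" using H by metis
  next
    assume "\<exists>w. eval J B (\<lambda>i. if i \<in> set (x # l) then w i else v i) F"
    then obtain w where H: "eval J B (\<lambda>i. if i \<in> set (x # l) then w i else v i) F" by blast
    have "(\<lambda>i. if i \<in> set l then w i else (v(x := w x)) i) = (\<lambda>i. if i \<in> set (x # l) then w i else v i)"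
      by auto
    then show "eval J B v (foldr Ex (x # l) F)" using H Cons by (simp, metis)
  qed
qed

lemma map_override: "map (\<lambda>i. if i \<in> set [0..<k] then w i else v i) [0..<k] = map w [0..<k]"
  by simp

lemma eval_all_tuple: "eval J B v (all_tuple k F) = (\<forall>w. eval J B (\<lambda>i. if i \<in> set [0..<k] then w i else v i) F)"
  by (simp add: all_tuple_def eval_foldr_All)
lemma eval_ex_tuple: "eval J B v (ex_tuple k F) = (\<exists>w. eval J B (\<lambda>i. if i \<in> set [0..<k] then w i else v i) F)"
  by (simp add: ex_tuple_def eval_foldr_Ex)

lemma holds_all_tuple: "holds J B (all_tuple k F) = holds J B F"
  by (simp add: all_tuple_def holds_foldr_All)



fun basem :: "('b \<Rightarrow> 'c list \<Rightarrow> bool) \<Rightarrow> (nat \<Rightarrow> 'c) \<Rightarrow> ('b,'c) batom \<Rightarrow> bool" where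
  "basem B v (BEq t u) = (tval v t = tval v u)"
| "basem B v (BRel b ts) = B b (map (tval v) ts)"

fun bsem :: "('b \<Rightarrow> 'c list \<Rightarrow> bool) \<Rightarrow> (nat \<Rightarrow> 'c) \<Rightarrow> bool \<times> ('b,'c) batom \<Rightarrow> bool" where
  "bsem B v (True, a) = (\<not> basem B v a)"
| "bsem B v (False, a) = basem B v a"

lemma eval_batom[simp]: "eval J B v (batom_fm a) = basem B v a"
  by (cases a) auto

lemma circ_batom[simp]: "circ (batom_fm a) = batom_fm a"
  by (cases a) auto

lemma eval_bneg[simp]: "eval J B v (bneg l) = bsem B v l"
  by (cases l; cases "fst l") (auto simp: Neg_def)

lemma eval_circ_bneg[simp]: "eval (case_sum I X) B v (circ (bneg l)) = bsem B v l"
  by (cases l; cases "fst l") (auto simp: Neg_def eval_ren)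

lemma ball_concat_if: "(\<forall>F\<in>set (concat (map (\<lambda>q. if P q then [f q] else []) qs)). G F) = (\<forall>q\<in>set qs. P q \<longrightarrow> G (f q))"
  by (induction qs) auto

definition R2 :: "('p rp \<Rightarrow> 'c list \<Rightarrow> bool) \<Rightarrow> ('p \<Rightarrow> 'c list \<Rightarrow> bool) \<Rightarrow> ('b \<Rightarrow> 'c list \<Rightarrow> bool)
   \<Rightarrow> ('p,'b,'c) ucon \<Rightarrow> bool list \<Rightarrow> (nat \<Rightarrow> 'c) \<Rightarrow> bool" where
  "R2 J N B c bs v =
    ((\<forall>a\<in>set (ante c). J (PS (fst a)) (map v (snd a))) \<and>
     (\<forall>q\<in>set (zip (cons c) bs). snd q \<longrightarrow> J (PF (fst (fst q))) (map v (snd (fst q)))) \<and>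
     (\<forall>q\<in>set (zip (cons c) bs). \<not> snd q \<longrightarrow> N (fst (fst q)) (map v (snd (fst q)))) \<and>
     (\<forall>l\<in>set (phi c). bsem B v l)
     \<longrightarrow> (\<exists>a\<in>set (ante c). J (PF (fst a)) (map v (snd a))) \<or> (\<exists>a\<in>set (cons c). J (PT (fst a)) (map v (snd a))))"

lemma holds_rule2: "holds J B (rule2 c bs) = (\<forall>v. R2 J (\<lambda>q t. \<not> J (Orig q) t) B c bs v)"
  unfolding rule2_def Let_def holds_univ_close unfolding holds_def
  apply (simp only: eval.simps eval_conj_list eval_disj_list set_append ball_Un bex_Un ball_concat_if)
  by (simp add: R2_def Neg_def)

lemma holds_circ_rule2: "holds (case_sum I X) B (circ (rule2 c bs)) =
   (\<forall>v. R2 X (\<lambda>q t. \<not> X (Orig q) t \<and> \<not> I (Orig q) t) B c bs v \<and> R2 I (\<lambda>q t. \<not> I (Orig q) t) B c bs v)"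
  unfolding rule2_def Let_def holds_circ_univ_close unfolding holds_def
  apply (simp only: circ.simps eval.simps eval_circ_conj_list eval_circ_disj_list eval_ren
     eval_conj_list eval_disj_list set_append ball_Un bex_Un ball_concat_if)
  by (simp add: R2_def Neg_def eval_ren)

definition factsS :: "('p rp \<Rightarrow> 'c list \<Rightarrow> bool) \<Rightarrow> ('p \<times> 'c list) list \<Rightarrow> bool" where
  "factsS J D = (\<forall>f\<in>set D. J (Orig (fst f)) (snd f))"

definition r2S where
  "r2S J N B IC = (\<forall>c\<in>set IC. \<forall>bs\<in>set (List.n_lists (length (cons c)) [True,False]). \<forall>v. R2 J N B c bs v)"

definition r3S :: "('p \<Rightarrow> nat) \<Rightarrow> 'p list \<Rightarrow> ('p rp \<Rightarrow> 'c list \<Rightarrow> bool) \<Rightarrow> bool" where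
  "r3S ar S J = (\<forall>P\<in>set S. \<forall>t. length t = ar P \<longrightarrow> (J (Orig P) t \<longrightarrow> J (PS P) t) \<and> (J (PT P) t \<longrightarrow> J (PS P) t))"

definition r4S :: "('p \<Rightarrow> nat) \<Rightarrow> 'p list \<Rightarrow> ('p rp \<Rightarrow> 'c list \<Rightarrow> bool) \<Rightarrow> ('p \<Rightarrow> 'c list \<Rightarrow> bool) \<Rightarrow> bool" where
  "r4S ar S J NF = (\<forall>P\<in>set S. \<forall>t. length t = ar P \<longrightarrow> J (PS P) t \<longrightarrow> NF P t \<longrightarrow> J (PSS P) t)"

definition r5S :: "('p \<Rightarrow> nat) \<Rightarrow> 'p list \<Rightarrow> ('p rp \<Rightarrow> 'c list \<Rightarrow> bool) \<Rightarrow> bool" where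
  "r5S ar S J = (\<forall>P\<in>set S. \<forall>t. length t = ar P \<longrightarrow> \<not> (J (PT P) t \<and> J (PF P) t))"

lemma holds_Atom_Cst: "holds J B (Atom p (map Cst c)) = J p c"
  by (simp add: holds_def comp_def)

lemma holds_facts: "holds J B (conj_list (facts D)) = factsS J D"
  by (simp add: holds_conj_list facts_def factsS_def holds_Atom_Cst)

lemma holds_circ_facts: "holds (case_sum I X) B (circ (conj_list (facts D))) = factsS X D"
  unfolding holds_circ_conj_list by (simp add: facts_def factsS_def holds_def comp_def)

lemma holds_rules2: "holds J B (conj_list (rules2 IC)) = r2S J (\<lambda>q t. \<not> J (Orig q) t) B IC"
  by (simp add: holds_conj_list rules2_def r2S_def holds_rule2)

lemma holds_circ_rules2: "holds (case_sum I X) B (circ (conj_list (rules2 IC))) =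
   (r2S X (\<lambda>q t. \<not> X (Orig q) t \<and> \<not> I (Orig q) t) B IC \<and> r2S I (\<lambda>q t. \<not> I (Orig q) t) B IC)"
  by (simp add: holds_circ_conj_list rules2_def r2S_def holds_circ_rule2) blast

lemma S1: "holds J B (Imp (Atom p (xs k)) (Atom q (xs k))) = (\<forall>t. length t = k \<longrightarrow> J p t \<longrightarrow> J q t)"
  using all_map_upt[of "\<lambda>t. J p t \<longrightarrow> J q t" k] by (simp add: holds_def)

lemma S1c: "holds (case_sum I X) B (circ (Imp (Atom p (xs k)) (Atom q (xs k)))) =
  (\<forall>t. length t = k \<longrightarrow> (X p t \<longrightarrow> X q t) \<and> (I p t \<longrightarrow> I q t))"
  using all_map_upt[of "\<lambda>t. (X p t \<longrightarrow> X q t) \<and> (I p t \<longrightarrow> I q t)" k] by (simp add: holds_def eval_ren)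

lemma S4: "holds J B (Imp (Conj (Atom p (xs k)) (Neg (Atom q (xs k)))) (Atom r (xs k))) =
   (\<forall>t. length t = k \<longrightarrow> J p t \<longrightarrow> \<not> J q t \<longrightarrow> J r t)"
  using all_map_upt[of "\<lambda>t. J p t \<longrightarrow> \<not> J q t \<longrightarrow> J r t" k] by (simp add: holds_def Neg_def imp_conjL)

lemma S4c: "holds (case_sum I X) B (circ (Imp (Conj (Atom p (xs k)) (Neg (Atom q (xs k)))) (Atom r (xs k)))) =
   (\<forall>t. length t = k \<longrightarrow> (X p t \<longrightarrow> \<not> X q t \<and> \<not> I q t \<longrightarrow> X r t) \<and> (I p t \<longrightarrow> \<not> I q t \<longrightarrow> I r t))"
  using all_map_upt[of "\<lambda>t. (X p t \<longrightarrow> \<not> X q t \<and> \<not> I q t \<longrightarrow> X r t) \<and> (I p t \<longrightarrow> \<not> I q t \<longrightarrow> I r t)" k]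
  by (simp add: holds_def Neg_def eval_ren imp_conjL)

lemma S5: "holds J B (Neg (Conj (Atom p (xs k)) (Atom q (xs k)))) = (\<forall>t. length t = k \<longrightarrow> \<not> (J p t \<and> J q t))"
  using all_map_upt[of "\<lambda>t. \<not> (J p t \<and> J q t)" k] by (simp add: holds_def Neg_def)

lemma S5c: "holds (case_sum I X) B (circ (Neg (Conj (Atom p (xs k)) (Atom q (xs k))))) =
   (\<forall>t. length t = k \<longrightarrow> \<not> (X p t \<and> X q t) \<and> \<not> (I p t \<and> I q t))"
  using all_map_upt[of "\<lambda>t. \<not> (X p t \<and> X q t) \<and> \<not> (I p t \<and> I q t)" k] by (simp add: holds_def Neg_def eval_ren)

lemma holds_rules3: "holds J B (conj_list (rules3 ar S)) = r3S ar S J"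
  by (simp add: holds_conj_list rules3_def r3S_def holds_univ_close set_concat S1) blast

lemma holds_circ_rules3: "holds (case_sum I X) B (circ (conj_list (rules3 ar S))) = (r3S ar S X \<and> r3S ar S I)"
  by (simp add: holds_circ_conj_list rules3_def r3S_def holds_circ_univ_close set_concat S1c del: circ.simps ren.simps) blast

lemma holds_rules4: "holds J B (conj_list (rules4 ar S)) = r4S ar S J (\<lambda>P t. \<not> J (PF P) t)"
  by (simp add: holds_conj_list rules4_def r4S_def holds_univ_close S4)

lemma holds_circ_rules4: "holds (case_sum I X) B (circ (conj_list (rules4 ar S))) =
   (r4S ar S X (\<lambda>P t. \<not> X (PF P) t \<and> \<not> I (PF P) t) \<and> r4S ar S I (\<lambda>P t. \<not> I (PF P) t))"
  by (simp add: holds_circ_conj_list rules4_def r4S_def holds_circ_univ_close S4c del: circ.simps ren.simps) blast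

lemma holds_rules5: "holds J B (conj_list (rules5 ar S)) = r5S ar S J"
  by (simp add: holds_conj_list rules5_def r5S_def holds_univ_close S5)

lemma holds_circ_rules5: "holds (case_sum I X) B (circ (conj_list (rules5 ar S))) = (r5S ar S X \<and> r5S ar S I)"
  by (simp add: holds_circ_conj_list rules5_def r5S_def holds_circ_univ_close S5c del: circ.simps ren.simps) blast



lemma holds_ren: "holds J B (ren f F) = holds (\<lambda>r. J (f r)) B F"
  by (simp add: holds_def eval_ren)

lemma holds_conj_append: "holds J B (conj_list (Fs @ Gs)) = (holds J B (conj_list Fs) \<and> holds J B (conj_list Gs))"
  by (auto simp: holds_conj_list)

lemma holds_circ_conj_append: "holds J B (circ (conj_list (Fs @ Gs))) = (holds J B (circ (conj_list Fs)) \<and> holds J B (circ (conj_list Gs)))"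
  by (auto simp: holds_circ_conj_list)

lemma holds_psi: "holds J B (psi ar S IC D) = (factsS J D \<and> r2S J (\<lambda>q t. \<not> J (Orig q) t) B IC \<and> r3S ar S J
   \<and> r4S ar S J (\<lambda>P t. \<not> J (PF P) t) \<and> r5S ar S J)"
  by (simp only: psi_def holds_conj_append holds_facts holds_rules2 holds_rules3 holds_rules4 holds_rules5)

lemma holds_circ_psi: "holds (case_sum I X) B (circ (psi ar S IC D)) = (factsS X D \<and>
   (r2S X (\<lambda>q t. \<not> X (Orig q) t \<and> \<not> I (Orig q) t) B IC \<and> r2S I (\<lambda>q t. \<not> I (Orig q) t) B IC) \<and>
   (r3S ar S X \<and> r3S ar S I) \<and>
   (r4S ar S X (\<lambda>P t. \<not> X (PF P) t \<and> \<not> I (PF P) t) \<and> r4S ar S I (\<lambda>P t. \<not> I (PF P) t)) \<and>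
   (r5S ar S X \<and> r5S ar S I))"
  by (simp only: psi_def holds_circ_conj_append holds_circ_facts holds_circ_rules2 holds_circ_rules3
       holds_circ_rules4 holds_circ_rules5)

lemma holds_Theta: "holds J B (Theta ar S IC D) = (factsS J D \<and> r2S J (\<lambda>q t. \<not> J (Orig q) t) B IC \<and> r3S ar S J)"
  by (simp only: Theta_def holds_conj_append holds_facts holds_rules2 holds_rules3)

lemma map_override_lt: "map (\<lambda>i. if i < k then w i else v i) [0..<k] = map w [0..<k]"
  by simp

lemma eval_le_tuple: "eval J B v (all_tuple k (Imp (Atom p (xs k)) (Atom q (xs k)))) = (\<forall>t. length t = k \<longrightarrow> J p t \<longrightarrow> J q t)"
  using all_map_upt[of "\<lambda>t. J p t \<longrightarrow> J q t" k] by (simp add: eval_all_tuple map_override_lt)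

lemma eval_eq_tuple: "eval J B v (all_tuple k (Iff (Atom p (xs k)) (Atom q (xs k)))) = (\<forall>t. length t = k \<longrightarrow> (J p t \<longleftrightarrow> J q t))"
  using all_map_upt[of "\<lambda>t. J p t \<longleftrightarrow> J q t" k] by (simp add: eval_all_tuple map_override_lt Iff_def) blast

lemma eval_ex_tuple_diff: "eval J B v (ex_tuple k (Conj (Atom p (xs k)) (Neg (Atom q (xs k))))) = (\<exists>t. length t = k \<and> J p t \<and> \<not> J q t)"
  using ex_map_upt[of "\<lambda>t. J p t \<and> \<not> J q t" k] by (simp add: eval_ex_tuple map_override_lt Neg_def)

lemma eval_le_fm: "eval (case_sum I X) B v (le_fm ar ps) = (\<forall>p\<in>set ps. \<forall>t. length t = ar p \<longrightarrow> X p t \<longrightarrow> I p t)"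
  by (simp add: le_fm_def eval_conj_list eval_le_tuple)

lemma holds_le_fm: "holds (case_sum I X) B (le_fm ar ps) = (\<forall>p\<in>set ps. \<forall>t. length t = ar p \<longrightarrow> X p t \<longrightarrow> I p t)"
  by (simp add: holds_def eval_le_fm)

lemma eval_eq_fm: "eval (case_sum I X) B v (eq_fm ar ps) = (\<forall>p\<in>set ps. \<forall>t. length t = ar p \<longrightarrow> (X p t \<longleftrightarrow> I p t))"
  by (simp add: eq_fm_def eval_conj_list eval_eq_tuple)

lemma holds_less_fm: "holds (case_sum I X) B (less_fm ar ps) = ((\<forall>p\<in>set ps. \<forall>t. length t = ar p \<longrightarrow> X p t \<longrightarrow> I p t)
   \<and> (\<exists>p\<in>set ps. \<exists>t. length t = ar p \<and> I p t \<and> \<not> X p t))"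
  by (simp add: less_fm_def holds_def eval_le_fm eval_disj_list eval_ex_tuple_diff)

lemma case_sum_if: "(\<lambda>r. case_sum I Z (if P r then Inr r else Inl r)) = (\<lambda>r. if P r then Z r else I r)"
  by (auto simp: fun_eq_iff)

lemma holds_Circ_body: "holds (case_sum I Z) B (Conj (ren (\<lambda>r. if r \<in> set Ps \<union> set Qs then Inr r else Inl r) Sg)
                 (Conj (le_fm ar Ps) (Neg (eq_fm ar Ps)))) =
  (holds (\<lambda>r. if r \<in> set Ps \<union> set Qs then Z r else I r) B Sg \<and>
   (\<forall>p\<in>set Ps. \<forall>t. length t = ar p \<longrightarrow> Z p t \<longrightarrow> I p t) \<and>
   \<not> (\<forall>p\<in>set Ps. \<forall>t. length t = ar p \<longrightarrow> (Z p t \<longleftrightarrow> I p t)))"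
  by (simp add: holds_Conj holds_ren case_sum_if holds_le_fm del: eval.simps)
     (simp add: holds_def Neg_def eval_eq_fm)



lemma SI1: "holds J B (all_tuple k (Iff (Disj (Atom p (xs k)) (Atom q (xs k))) (Atom r (xs k)))) =
   (\<forall>t. length t = k \<longrightarrow> (J p t \<or> J q t \<longleftrightarrow> J r t))"
  using all_map_upt[of "\<lambda>t. (J p t \<or> J q t \<longleftrightarrow> J r t)" k]
  unfolding holds_all_tuple by (simp add: holds_def Iff_def) blast

lemma SI2: "holds J B (all_tuple k (Iff (Conj (Atom p (xs k)) (Neg (Atom q (xs k)))) (Atom r (xs k)))) =
   (\<forall>t. length t = k \<longrightarrow> (J p t \<and> \<not> J q t \<longleftrightarrow> J r t))"
  using all_map_upt[of "\<lambda>t. (J p t \<and> \<not> J q t \<longleftrightarrow> J r t)" k]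
  unfolding holds_all_tuple by (simp add: holds_def Iff_def Neg_def) blast

lemma SN: "holds J B (all_tuple k (Neg (Conj (Atom p (xs k)) (Atom q (xs k))))) =
   (\<forall>t. length t = k \<longrightarrow> \<not> (J p t \<and> J q t))"
  using all_map_upt[of "\<lambda>t. \<not> (J p t \<and> J q t)" k]
  unfolding holds_all_tuple by (simp add: holds_def Neg_def)

lemma bex_concat_if: "(\<exists>F\<in>set (concat (map (\<lambda>q. if P q then [f q] else []) qs)). G F) = (\<exists>q\<in>set qs. P q \<and> G (f q))"
  by (induction qs) auto

lemma map_upt_eq: "length s = k \<Longrightarrow> (\<forall>i\<in>set [0..<k]. v i = s ! i) = (map v [0..<k] = s)"
  unfolding list_eq_iff_nth_eq by auto

lemma R_orig:
  assumes "\<forall>f\<in>set D. fst f = P \<longrightarrow> length (snd f) = ar P"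
  shows "holds I B (all_tuple (ar P) (Iff (Atom (Orig P) (xs (ar P)))
           (disj_list [conj_list (map (\<lambda>i. Eq (Var i) (Cst (snd f ! i))) [0..<ar P]). f \<leftarrow> D, fst f = P])))
   = (\<forall>t. length t = ar P \<longrightarrow> (I (Orig P) t \<longleftrightarrow> (P, t) \<in> set D))"
proof -
  have e: "eval I B v (disj_list [conj_list (map (\<lambda>i. Eq (Var i) (Cst (snd f ! i))) [0..<ar P]). f \<leftarrow> D, fst f = P])
        = ((P, map v [0..<ar P]) \<in> set D)" for v
  proof -
    have "eval I B v (disj_list [conj_list (map (\<lambda>i. Eq (Var i) (Cst (snd f ! i))) [0..<ar P]). f \<leftarrow> D, fst f = P])
      = (\<exists>f\<in>set D. fst f = P \<and> (\<forall>i\<in>set [0..<ar P]. v i = snd f ! i))"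
      by (simp only: eval_disj_list bex_concat_if eval_conj_list) simp
    also have "\<dots> = (\<exists>f\<in>set D. fst f = P \<and> map v [0..<ar P] = snd f)"
    proof (rule bex_cong[OF refl])
      fix f assume f: "f \<in> set D"
      show "(fst f = P \<and> (\<forall>i\<in>set [0..<ar P]. v i = snd f ! i)) = (fst f = P \<and> map v [0..<ar P] = snd f)"
        using assms f map_upt_eq[of "snd f" "ar P" v] by auto
    qed
    also have "\<dots> = ((P, map v [0..<ar P]) \<in> set D)"
    proof
      assume "\<exists>f\<in>set D. fst f = P \<and> map v [0..<ar P] = snd f"
      then obtain f where "f \<in> set D" "fst f = P" "map v [0..<ar P] = snd f" by blast
      then show "(P, map v [0..<ar P]) \<in> set D" by (metis prod.collapse)
    next
      assume "(P, map v [0..<ar P]) \<in> set D"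
      then show "\<exists>f\<in>set D. fst f = P \<and> map v [0..<ar P] = snd f" by force
    qed
    finally show ?thesis .
  qed
  show ?thesis
    using all_map_upt[of "\<lambda>t. (I (Orig P) t \<longleftrightarrow> (P, t) \<in> set D)" "ar P"]
    unfolding holds_all_tuple by (simp only: holds_def Iff_def eval.simps e map_tval_xs) blast
qed

lemma holds_R:
  assumes "wf_db ar S D"
  shows "holds I B (R_fm ar S D) = (\<forall>P\<in>set S. \<forall>t. length t = ar P \<longrightarrow> (I (Orig P) t \<longleftrightarrow> (P, t) \<in> set D))"
proof -
  have a: "holds I B (All 0 (disj_list (map (\<lambda>c. Eq (Var 0) (Cst c)) Enum.enum)))"
    by (simp add: holds_def eval_disj_list in_enum)
  have b: "holds I B (conj_list [Neg (Eq (Cst c) (Cst d)). c \<leftarrow> Enum.enum, d \<leftarrow> Enum.enum, c \<noteq> d])"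
    by (simp only: holds_conj_list set_concat) (auto simp: holds_def Neg_def)
  have c: "\<forall>P\<in>set S. \<forall>f\<in>set D. fst f = P \<longrightarrow> length (snd f) = ar P"
    using assms by (auto simp: wf_db_def)
  have d: "holds I B (all_tuple (ar P) (Iff (Atom (Orig P) (xs (ar P)))
           (disj_list [conj_list (map (\<lambda>i. Eq (Var i) (Cst (snd f ! i))) [0..<ar P]). f \<leftarrow> D, fst f = P])))
   = (\<forall>t. length t = ar P \<longrightarrow> (I (Orig P) t \<longleftrightarrow> (P, t) \<in> set D))" if "P \<in> set S" for P
    using c that by (intro R_orig) auto
  have e: "holds I B (conj_list (map (\<lambda>P. all_tuple (ar P)
           (Iff (Atom (Orig P) (xs (ar P)))
                (disj_list [conj_list (map (\<lambda>i. Eq (Var i) (Cst (snd f ! i))) [0..<ar P]).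
                            f \<leftarrow> D, fst f = P]))) S))
     = (\<forall>P\<in>set S. \<forall>t. length t = ar P \<longrightarrow> (I (Orig P) t \<longleftrightarrow> (P, t) \<in> set D))"
    unfolding holds_conj_list using d by auto
  show ?thesis
    unfolding R_fm_def holds_Conj using a b e by blast
qed



lemma holds_E1: "holds J B (conj_list (map (\<lambda>P. all_tuple (ar P)
                 (Iff (Disj (Atom (Orig P) (xs (ar P))) (Atom (PT P) (xs (ar P))))
                      (Atom (PS P) (xs (ar P))))) S))
  = (\<forall>P\<in>set S. \<forall>t. length t = ar P \<longrightarrow> (J (Orig P) t \<or> J (PT P) t \<longleftrightarrow> J (PS P) t))"
  unfolding holds_conj_list by (simp add: SI1)

lemma holds_E2: "holds J B (conj_list (map (\<lambda>P. all_tuple (ar P)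
                 (Iff (Conj (Atom (PS P) (xs (ar P))) (Neg (Atom (PF P) (xs (ar P)))))
                      (Atom (PSS P) (xs (ar P))))) S))
  = (\<forall>P\<in>set S. \<forall>t. length t = ar P \<longrightarrow> (J (PS P) t \<and> \<not> J (PF P) t \<longleftrightarrow> J (PSS P) t))"
  unfolding holds_conj_list by (simp add: SI2)

lemma holds_E3: "holds J B (conj_list (map (\<lambda>P. all_tuple (ar P)
                 (Neg (Conj (Atom (PT P) (xs (ar P))) (Atom (PF P) (xs (ar P)))))) S))
  = (\<forall>P\<in>set S. \<forall>t. length t = ar P \<longrightarrow> \<not> (J (PT P) t \<and> J (PF P) t))"
  unfolding holds_conj_list by (simp add: SN)

lemma ball_preds: "(\<forall>p\<in>set (preds S). Q p) = (\<forall>P\<in>set S. Q (Orig P) \<and> Q (PT P) \<and> Q (PF P) \<and> Q (PS P) \<and> Q (PSS P))"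
  by (auto simp: preds_def)

lemma bex_preds: "(\<exists>p\<in>set (preds S). Q p) = (\<exists>P\<in>set S. Q (Orig P) \<or> Q (PT P) \<or> Q (PF P) \<or> Q (PS P) \<or> Q (PSS P))"
  by (auto simp: preds_def)

lemma ball_Ps: "(\<forall>p\<in>set (concat (map (\<lambda>P. [PT P, PF P]) S)). Q p) = (\<forall>P\<in>set S. Q (PT P) \<and> Q (PF P))"
  by auto

definition hyb :: "'r list \<Rightarrow> 'r list \<Rightarrow> ('r \<Rightarrow> 'x) \<Rightarrow> ('r \<Rightarrow> 'x) \<Rightarrow> 'r \<Rightarrow> 'x" where
  "hyb Ps Qs Z I = (\<lambda>r. if r \<in> set Ps \<union> set Qs then Z r else I r)"

lemma holds_Circ_body': "holds (case_sum I Z) B (Conj (ren (\<lambda>r. if r \<in> set Ps \<union> set Qs then Inr r else Inl r) Sg)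
                 (Conj (le_fm ar Ps) (Neg (eq_fm ar Ps)))) =
  (holds (hyb Ps Qs Z I) B Sg \<and>
   (\<forall>p\<in>set Ps. \<forall>t. length t = ar p \<longrightarrow> Z p t \<longrightarrow> I p t) \<and>
   \<not> (\<forall>p\<in>set Ps. \<forall>t. length t = ar p \<longrightarrow> (Z p t \<longleftrightarrow> I p t)))"
  unfolding hyb_def by (rule holds_Circ_body)


lemma hyb_Orig[simp]: "hyb (concat (map (\<lambda>P. [PT P, PF P]) S)) (map PS S) Z I (Orig q) = I (Orig q)"
  by (auto simp: hyb_def)
lemma hyb_PSS[simp]: "hyb (concat (map (\<lambda>P. [PT P, PF P]) S)) (map PS S) Z I (PSS q) = I (PSS q)"
  by (auto simp: hyb_def)
lemma hyb_PT[simp]: "q \<in> set S \<Longrightarrow> hyb (concat (map (\<lambda>P. [PT P, PF P]) S)) (map PS S) Z I (PT q) = Z (PT q)"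
  by (auto simp: hyb_def)
lemma hyb_PF[simp]: "q \<in> set S \<Longrightarrow> hyb (concat (map (\<lambda>P. [PT P, PF P]) S)) (map PS S) Z I (PF q) = Z (PF q)"
  by (auto simp: hyb_def)
lemma hyb_PS[simp]: "q \<in> set S \<Longrightarrow> hyb (concat (map (\<lambda>P. [PT P, PF P]) S)) (map PS S) Z I (PS q) = Z (PS q)"
  by (auto simp: hyb_def)

lemma R2_mono:
  assumes "R2 J N B c bs v"
  and "\<forall>a\<in>set (ante c). J' (PS (fst a)) (map v (snd a)) \<longrightarrow> J (PS (fst a)) (map v (snd a))"
  and "\<forall>a\<in>set (ante c). J (PF (fst a)) (map v (snd a)) \<longrightarrow> J' (PF (fst a)) (map v (snd a))"
  and "\<forall>a\<in>set (cons c). J' (PF (fst a)) (map v (snd a)) \<longrightarrow> J (PF (fst a)) (map v (snd a))"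
  and "\<forall>a\<in>set (cons c). N' (fst a) (map v (snd a)) \<longrightarrow> N (fst a) (map v (snd a))"
  and "\<forall>a\<in>set (cons c). J (PT (fst a)) (map v (snd a)) \<longrightarrow> J' (PT (fst a)) (map v (snd a))"
  shows "R2 J' N' B c bs v"
proof -
  let ?bJ = "(\<forall>a\<in>set (ante c). J (PS (fst a)) (map v (snd a))) \<and>
     (\<forall>q\<in>set (zip (cons c) bs). snd q \<longrightarrow> J (PF (fst (fst q))) (map v (snd (fst q)))) \<and>
     (\<forall>q\<in>set (zip (cons c) bs). \<not> snd q \<longrightarrow> N (fst (fst q)) (map v (snd (fst q)))) \<and>
     (\<forall>l\<in>set (phi c). bsem B v l)"
  let ?bJ' = "(\<forall>a\<in>set (ante c). J' (PS (fst a)) (map v (snd a))) \<and>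
     (\<forall>q\<in>set (zip (cons c) bs). snd q \<longrightarrow> J' (PF (fst (fst q))) (map v (snd (fst q)))) \<and>
     (\<forall>q\<in>set (zip (cons c) bs). \<not> snd q \<longrightarrow> N' (fst (fst q)) (map v (snd (fst q)))) \<and>
     (\<forall>l\<in>set (phi c). bsem B v l)"
  let ?hJ = "(\<exists>a\<in>set (ante c). J (PF (fst a)) (map v (snd a))) \<or> (\<exists>a\<in>set (cons c). J (PT (fst a)) (map v (snd a)))"
  let ?hJ' = "(\<exists>a\<in>set (ante c). J' (PF (fst a)) (map v (snd a))) \<or> (\<exists>a\<in>set (cons c). J' (PT (fst a)) (map v (snd a)))"
  have H: "?bJ \<longrightarrow> ?hJ" using assms(1) unfolding R2_def .
  have "?bJ' \<longrightarrow> ?hJ'"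
  proof
    assume b: ?bJ'
    have b1: "\<forall>a\<in>set (ante c). J (PS (fst a)) (map v (snd a))" using b assms(2) by blast
    have b2: "\<forall>q\<in>set (zip (cons c) bs). snd q \<longrightarrow> J (PF (fst (fst q))) (map v (snd (fst q)))"
    proof (intro ballI impI)
      fix q assume q: "q \<in> set (zip (cons c) bs)" "snd q"
      have "fst q \<in> set (cons c)" using set_zip_leftD[of "fst q" "snd q"] q(1) by simp
      then show "J (PF (fst (fst q))) (map v (snd (fst q)))" using b q assms(4) by blast
    qed
    have b3: "\<forall>q\<in>set (zip (cons c) bs). \<not> snd q \<longrightarrow> N (fst (fst q)) (map v (snd (fst q)))"
    proof (intro ballI impI)
      fix q assume q: "q \<in> set (zip (cons c) bs)" "\<not> snd q"
      have "fst q \<in> set (cons c)" using set_zip_leftD[of "fst q" "snd q"] q(1) by simp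
      then show "N (fst (fst q)) (map v (snd (fst q)))" using b q assms(5) by blast
    qed
    have "?hJ" using H b b1 b2 b3 by blast
    then show ?hJ' using assms(3,6) by blast
  qed
  then show ?thesis unfolding R2_def .
qed

lemma r2S_mono:
  assumes wf: "wf_ic ar S IC" and r: "r2S J N B IC"
  and h: "\<And>P t. P \<in> set S \<Longrightarrow> length t = ar P \<Longrightarrow> (J' (PS P) t \<longrightarrow> J (PS P) t) \<and> (J' (PF P) t = J (PF P) t)
            \<and> (J (PT P) t \<longrightarrow> J' (PT P) t) \<and> (N' P t \<longrightarrow> N P t)"
  shows "r2S J' N' B IC"
  unfolding r2S_def
proof (intro ballI allI)
  fix c bs v assume c: "c \<in> set IC" and bs: "bs \<in> set (List.n_lists (length (cons c)) [True, False])"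
  have wa: "fst a \<in> set S \<and> length (snd a) = ar (fst a)" if "a \<in> set (ante c)" for a
    using wf c that by (auto simp: wf_ic_def)
  have wc: "fst a \<in> set S \<and> length (snd a) = ar (fst a)" if "a \<in> set (cons c)" for a
    using wf c that by (auto simp: wf_ic_def)
  have "R2 J N B c bs v" using r c bs by (auto simp: r2S_def)
  then show "R2 J' N' B c bs v"
    apply (rule R2_mono)
    using h wa wc by (metis length_map)+
qed

lemma dirA:
  assumes wfd: "wf_db ar S D" and wfi: "wf_ic ar S IC"
  and fI: "factsS I D" and r2I: "r2S I (\<lambda>q t. \<not> I (Orig q) t) B IC" and r3I: "r3S ar S I"
  and r4I: "r4S ar S I (\<lambda>P t. \<not> I (PF P) t)" and r5I: "r5S ar S I"
  and min: "\<not> (\<exists>X. ((\<forall>P\<in>set S.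
                (\<forall>t. length t = ar P \<longrightarrow> X (Orig P) t \<longrightarrow> I (Orig P) t) \<and>
                (\<forall>t. length t = ar P \<longrightarrow> X (PT P) t \<longrightarrow> I (PT P) t) \<and>
                (\<forall>t. length t = ar P \<longrightarrow> X (PF P) t \<longrightarrow> I (PF P) t) \<and>
                (\<forall>t. length t = ar P \<longrightarrow> X (PS P) t \<longrightarrow> I (PS P) t) \<and>
                (\<forall>t. length t = ar P \<longrightarrow> X (PSS P) t \<longrightarrow> I (PSS P) t)) \<and>
            (\<exists>P\<in>set S.
                (\<exists>t. length t = ar P \<and> I (Orig P) t \<and> \<not> X (Orig P) t) \<or>
                (\<exists>t. length t = ar P \<and> I (PT P) t \<and> \<not> X (PT P) t) \<or>
                (\<exists>t. length t = ar P \<and> I (PF P) t \<and> \<not> X (PF P) t) \<or>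
                (\<exists>t. length t = ar P \<and> I (PS P) t \<and> \<not> X (PS P) t) \<or>
                (\<exists>t. length t = ar P \<and> I (PSS P) t \<and> \<not> X (PSS P) t))) \<and>
           factsS X D \<and>
           (r2S X (\<lambda>q t. \<not> X (Orig q) t \<and> \<not> I (Orig q) t) B IC \<and>
            r2S I (\<lambda>q t. \<not> I (Orig q) t) B IC) \<and>
           (r3S ar S X \<and> r3S ar S I) \<and>
           (r4S ar S X (\<lambda>P t. \<not> X (PF P) t \<and> \<not> I (PF P) t) \<and>
            r4S ar S I (\<lambda>P t. \<not> I (PF P) t)) \<and>
           r5S ar S X \<and> r5S ar S I)"
  shows "((\<forall>P\<in>set S. \<forall>t. length t = ar P \<longrightarrow> I (Orig P) t = ((P, t) \<in> set D)) \<and>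
       (\<forall>P\<in>set S. \<forall>t. length t = ar P \<longrightarrow> (I (Orig P) t \<or> I (PT P) t) = I (PS P) t) \<and>
       (\<forall>P\<in>set S. \<forall>t. length t = ar P \<longrightarrow> (I (PS P) t \<and> \<not> I (PF P) t) = I (PSS P) t) \<and>
       (\<forall>P\<in>set S. \<forall>t. length t = ar P \<longrightarrow> \<not> (I (PT P) t \<and> I (PF P) t))) \<and>
      (factsS I D \<and> r2S I (\<lambda>q t. \<not> I (Orig q) t) B IC \<and> r3S ar S I) \<and>
      (\<nexists>Z. (factsS (hyb (concat (map (\<lambda>P. [PT P, PF P]) S)) (map PS S) Z I) D \<and>
            r2S (hyb (concat (map (\<lambda>P. [PT P, PF P]) S)) (map PS S) Z I)
             (\<lambda>q t. \<not> hyb (concat (map (\<lambda>P. [PT P, PF P]) S)) (map PS S) Z I (Orig q) t) B IC \<and>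
            r3S ar S (hyb (concat (map (\<lambda>P. [PT P, PF P]) S)) (map PS S) Z I)) \<and>
           (\<forall>P\<in>set S.
               (\<forall>t. length t = ar P \<longrightarrow> Z (PT P) t \<longrightarrow> I (PT P) t) \<and>
               (\<forall>t. length t = ar P \<longrightarrow> Z (PF P) t \<longrightarrow> I (PF P) t)) \<and>
           \<not> (\<forall>P\<in>set S.
                 (\<forall>t. length t = ar P \<longrightarrow> Z (PT P) t = I (PT P) t) \<and>
                 (\<forall>t. length t = ar P \<longrightarrow> Z (PF P) t = I (PF P) t)))"
proof -
  have minX: "False" if le: "\<forall>p s. X p s \<longrightarrow> I p s" and P: "P \<in> set S" and len: "length t = ar P"
    and st: "(I (Orig P) t \<and> \<not> X (Orig P) t) \<or> (I (PT P) t \<and> \<not> X (PT P) t) \<or> (I (PF P) t \<and> \<not> X (PF P) t)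
        \<or> (I (PS P) t \<and> \<not> X (PS P) t) \<or> (I (PSS P) t \<and> \<not> X (PSS P) t)"
    and fX: "factsS X D" and r2X: "r2S X (\<lambda>q t. \<not> X (Orig q) t \<and> \<not> I (Orig q) t) B IC"
    and r3X: "r3S ar S X" and r4X: "r4S ar S X (\<lambda>P t. \<not> X (PF P) t \<and> \<not> I (PF P) t)" and r5X: "r5S ar S X"
    for X P t
  proof -
    have A: "\<forall>P\<in>set S.
                (\<forall>t. length t = ar P \<longrightarrow> X (Orig P) t \<longrightarrow> I (Orig P) t) \<and>
                (\<forall>t. length t = ar P \<longrightarrow> X (PT P) t \<longrightarrow> I (PT P) t) \<and>
                (\<forall>t. length t = ar P \<longrightarrow> X (PF P) t \<longrightarrow> I (PF P) t) \<and>
                (\<forall>t. length t = ar P \<longrightarrow> X (PS P) t \<longrightarrow> I (PS P) t) \<and>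
                (\<forall>t. length t = ar P \<longrightarrow> X (PSS P) t \<longrightarrow> I (PSS P) t)" using le by blast
    have Bx: "\<exists>P\<in>set S.
                (\<exists>t. length t = ar P \<and> I (Orig P) t \<and> \<not> X (Orig P) t) \<or>
                (\<exists>t. length t = ar P \<and> I (PT P) t \<and> \<not> X (PT P) t) \<or>
                (\<exists>t. length t = ar P \<and> I (PF P) t \<and> \<not> X (PF P) t) \<or>
                (\<exists>t. length t = ar P \<and> I (PS P) t \<and> \<not> X (PS P) t) \<or>
                (\<exists>t. length t = ar P \<and> I (PSS P) t \<and> \<not> X (PSS P) t)" using P len st by blast
    show False
      apply (rule notE[OF min])
      apply (rule exI[of _ X])
      by (intro conjI A Bx fX r2X r2I r3X r3I r4X r4I r5X r5I)
  qed
  have O: "\<forall>P\<in>set S. \<forall>t. length t = ar P \<longrightarrow> I (Orig P) t = ((P, t) \<in> set D)"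
  proof (intro ballI allI impI iffI)
    fix P t assume P: "P \<in> set S" and len: "length t = ar P" and It: "I (Orig P) t"
    show "(P, t) \<in> set D"
    proof (rule ccontr)
      assume nD: "(P, t) \<notin> set D"
      define X where "X = I(Orig P := (\<lambda>s. I (Orig P) s \<and> s \<noteq> t))"
      have le: "\<forall>p s. X p s \<longrightarrow> I p s" by (simp add: X_def)
      have fX: "factsS X D" unfolding factsS_def
      proof
        fix f assume f: "f \<in> set D"
        have "f \<noteq> (P, t)" using f nD by blast
        then show "X (Orig (fst f)) (snd f)" using fI f by (cases f) (auto simp: factsS_def X_def)
      qed
      have r2X: "r2S X (\<lambda>q t. \<not> X (Orig q) t \<and> \<not> I (Orig q) t) B IC"
        by (rule r2S_mono[OF wfi r2I]) (auto simp: X_def)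
      have r3X: "r3S ar S X" using r3I by (auto simp: r3S_def X_def)
      have r4X: "r4S ar S X (\<lambda>P t. \<not> X (PF P) t \<and> \<not> I (PF P) t)" using r4I by (auto simp: r4S_def X_def)
      have r5X: "r5S ar S X" using r5I by (auto simp: r5S_def X_def)
      show False by (rule minX[OF le P len _ fX r2X r3X r4X r5X]) (simp add: X_def It)
    qed
  next
    fix P t assume "(P, t) \<in> set D"
    then show "I (Orig P) t" using fI unfolding factsS_def by fastforce
  qed
  have E1: "\<forall>P\<in>set S. \<forall>t. length t = ar P \<longrightarrow> (I (Orig P) t \<or> I (PT P) t) = I (PS P) t"
  proof (intro ballI allI impI iffI)
    fix P t assume "P \<in> set S" "length t = ar P" "I (Orig P) t \<or> I (PT P) t"
    then show "I (PS P) t" using r3I by (auto simp: r3S_def)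
  next
    fix P t assume P: "P \<in> set S" and len: "length t = ar P" and It: "I (PS P) t"
    show "I (Orig P) t \<or> I (PT P) t"
    proof (rule ccontr)
      assume n: "\<not> (I (Orig P) t \<or> I (PT P) t)"
      define X where "X = I(PS P := (\<lambda>s. I (PS P) s \<and> s \<noteq> t))"
      have le: "\<forall>p s. X p s \<longrightarrow> I p s" by (simp add: X_def)
      have fX: "factsS X D" using fI by (simp add: factsS_def X_def)
      have r2X: "r2S X (\<lambda>q t. \<not> X (Orig q) t \<and> \<not> I (Orig q) t) B IC"
        by (rule r2S_mono[OF wfi r2I]) (auto simp: X_def)
      have r3X: "r3S ar S X" using r3I n by (auto simp: r3S_def X_def)
      have r4X: "r4S ar S X (\<lambda>P t. \<not> X (PF P) t \<and> \<not> I (PF P) t)" using r4I by (auto simp: r4S_def X_def)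
      have r5X: "r5S ar S X" using r5I by (auto simp: r5S_def X_def)
      show False by (rule minX[OF le P len _ fX r2X r3X r4X r5X]) (simp add: X_def It)
    qed
  qed
  have E2: "\<forall>P\<in>set S. \<forall>t. length t = ar P \<longrightarrow> (I (PS P) t \<and> \<not> I (PF P) t) = I (PSS P) t"
  proof (intro ballI allI impI iffI)
    fix P t assume "P \<in> set S" "length t = ar P" "I (PS P) t \<and> \<not> I (PF P) t"
    then show "I (PSS P) t" using r4I by (auto simp: r4S_def)
  next
    fix P t assume P: "P \<in> set S" and len: "length t = ar P" and It: "I (PSS P) t"
    show "I (PS P) t \<and> \<not> I (PF P) t"
    proof (rule ccontr)
      assume n: "\<not> (I (PS P) t \<and> \<not> I (PF P) t)"
      define X where "X = I(PSS P := (\<lambda>s. I (PSS P) s \<and> s \<noteq> t))"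
      have le: "\<forall>p s. X p s \<longrightarrow> I p s" by (simp add: X_def)
      have fX: "factsS X D" using fI by (simp add: factsS_def X_def)
      have r2X: "r2S X (\<lambda>q t. \<not> X (Orig q) t \<and> \<not> I (Orig q) t) B IC"
        by (rule r2S_mono[OF wfi r2I]) (auto simp: X_def)
      have r3X: "r3S ar S X" using r3I by (auto simp: r3S_def X_def)
      have r4X: "r4S ar S X (\<lambda>P t. \<not> X (PF P) t \<and> \<not> I (PF P) t)" using r4I n by (auto simp: r4S_def X_def)
      have r5X: "r5S ar S X" using r5I by (auto simp: r5S_def X_def)
      show False by (rule minX[OF le P len _ fX r2X r3X r4X r5X]) (simp add: X_def It)
    qed
  qed
  have E3: "\<forall>P\<in>set S. \<forall>t. length t = ar P \<longrightarrow> \<not> (I (PT P) t \<and> I (PF P) t)"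
    using r5I by (simp add: r5S_def)
  have CM: "\<nexists>Z. (factsS (hyb (concat (map (\<lambda>P. [PT P, PF P]) S)) (map PS S) Z I) D \<and>
            r2S (hyb (concat (map (\<lambda>P. [PT P, PF P]) S)) (map PS S) Z I)
             (\<lambda>q t. \<not> hyb (concat (map (\<lambda>P. [PT P, PF P]) S)) (map PS S) Z I (Orig q) t) B IC \<and>
            r3S ar S (hyb (concat (map (\<lambda>P. [PT P, PF P]) S)) (map PS S) Z I)) \<and>
           (\<forall>P\<in>set S.
               (\<forall>t. length t = ar P \<longrightarrow> Z (PT P) t \<longrightarrow> I (PT P) t) \<and>
               (\<forall>t. length t = ar P \<longrightarrow> Z (PF P) t \<longrightarrow> I (PF P) t)) \<and>
           \<not> (\<forall>P\<in>set S.
                 (\<forall>t. length t = ar P \<longrightarrow> Z (PT P) t = I (PT P) t) \<and>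
                 (\<forall>t. length t = ar P \<longrightarrow> Z (PF P) t = I (PF P) t))"
  proof
    assume "\<exists>Z. (factsS (hyb (concat (map (\<lambda>P. [PT P, PF P]) S)) (map PS S) Z I) D \<and>
            r2S (hyb (concat (map (\<lambda>P. [PT P, PF P]) S)) (map PS S) Z I)
             (\<lambda>q t. \<not> hyb (concat (map (\<lambda>P. [PT P, PF P]) S)) (map PS S) Z I (Orig q) t) B IC \<and>
            r3S ar S (hyb (concat (map (\<lambda>P. [PT P, PF P]) S)) (map PS S) Z I)) \<and>
           (\<forall>P\<in>set S.
               (\<forall>t. length t = ar P \<longrightarrow> Z (PT P) t \<longrightarrow> I (PT P) t) \<and>
               (\<forall>t. length t = ar P \<longrightarrow> Z (PF P) t \<longrightarrow> I (PF P) t)) \<and>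
           \<not> (\<forall>P\<in>set S.
                 (\<forall>t. length t = ar P \<longrightarrow> Z (PT P) t = I (PT P) t) \<and>
                 (\<forall>t. length t = ar P \<longrightarrow> Z (PF P) t = I (PF P) t))"
    then obtain Z where H1: "factsS (hyb (concat (map (\<lambda>P. [PT P, PF P]) S)) (map PS S) Z I) D \<and>
            r2S (hyb (concat (map (\<lambda>P. [PT P, PF P]) S)) (map PS S) Z I)
             (\<lambda>q t. \<not> hyb (concat (map (\<lambda>P. [PT P, PF P]) S)) (map PS S) Z I (Orig q) t) B IC \<and>
            r3S ar S (hyb (concat (map (\<lambda>P. [PT P, PF P]) S)) (map PS S) Z I)" and
      leZ: "\<forall>P\<in>set S.
               (\<forall>t. length t = ar P \<longrightarrow> Z (PT P) t \<longrightarrow> I (PT P) t) \<and>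
               (\<forall>t. length t = ar P \<longrightarrow> Z (PF P) t \<longrightarrow> I (PF P) t)" and
      neq: "\<not> (\<forall>P\<in>set S.
                 (\<forall>t. length t = ar P \<longrightarrow> Z (PT P) t = I (PT P) t) \<and>
                 (\<forall>t. length t = ar P \<longrightarrow> Z (PF P) t = I (PF P) t))"
      by blast
    from H1 have
      r2H: "r2S (hyb (concat (map (\<lambda>P. [PT P, PF P]) S)) (map PS S) Z I)
             (\<lambda>q t. \<not> hyb (concat (map (\<lambda>P. [PT P, PF P]) S)) (map PS S) Z I (Orig q) t) B IC" and
      r3H: "r3S ar S (hyb (concat (map (\<lambda>P. [PT P, PF P]) S)) (map PS S) Z I)"
      by auto
    let ?H = "hyb (concat (map (\<lambda>P. [PT P, PF P]) S)) (map PS S) Z I"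
    define X where "X = (\<lambda>r. case r of Orig q \<Rightarrow> I r | PT q \<Rightarrow> (\<lambda>s. ?H r s \<and> I r s)
        | PF q \<Rightarrow> (\<lambda>s. ?H r s \<and> I r s) | PS q \<Rightarrow> (\<lambda>s. (I (Orig q) s \<or> ?H (PT q) s) \<and> I r s) | PSS q \<Rightarrow> I r)"
    have X_Orig[simp]: "X (Orig q) = I (Orig q)" for q by (simp add: X_def)
    have X_PT[simp]: "X (PT q) s = (?H (PT q) s \<and> I (PT q) s)" for q s by (simp add: X_def)
    have X_PF[simp]: "X (PF q) s = (?H (PF q) s \<and> I (PF q) s)" for q s by (simp add: X_def)
    have X_PS[simp]: "X (PS q) s = ((I (Orig q) s \<or> ?H (PT q) s) \<and> I (PS q) s)" for q s by (simp add: X_def)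
    have X_PSS[simp]: "X (PSS q) = I (PSS q)" for q by (simp add: X_def)
    have le: "\<forall>p s. X p s \<longrightarrow> I p s"
    proof (intro allI impI)
      fix p s assume "X p s" then show "I p s" by (cases p) auto
    qed
    from neq obtain P t where P: "P \<in> set S" and len: "length t = ar P"
      and d: "Z (PT P) t \<noteq> I (PT P) t \<or> Z (PF P) t \<noteq> I (PF P) t" by blast
    have st: "(I (PT P) t \<and> \<not> X (PT P) t) \<or> (I (PF P) t \<and> \<not> X (PF P) t)"
      using d leZ P len by auto
    have fX: "factsS X D" using fI by (simp add: factsS_def)
    have r3Ha: "\<And>P t. P \<in> set S \<Longrightarrow> length t = ar P \<Longrightarrow> (I (Orig P) t \<longrightarrow> Z (PS P) t) \<and> (Z (PT P) t \<longrightarrow> Z (PS P) t)"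
      using r3H by (simp add: r3S_def)
    have r2X: "r2S X (\<lambda>q t. \<not> X (Orig q) t \<and> \<not> I (Orig q) t) B IC"
      apply (rule r2S_mono[OF wfi r2H])
      using r3Ha leZ by auto
    have r3X: "r3S ar S X" using r3I by (auto simp: r3S_def)
    have r4X: "r4S ar S X (\<lambda>P t. \<not> X (PF P) t \<and> \<not> I (PF P) t)" using r4I by (auto simp: r4S_def)
    have r5X: "r5S ar S X" using r5I by (auto simp: r5S_def)
    show False by (rule minX[OF le P len _ fX r2X r3X r4X r5X]) (use st in blast)
  qed
  show ?thesis by (intro conjI O E1 E2 E3 fI r2I r3I CM)
qed

lemma dirB:
  fixes I :: "'p rp \<Rightarrow> 'c list \<Rightarrow> bool" and X :: "'p rp \<Rightarrow> 'c list \<Rightarrow> bool"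
  assumes wfd: "wf_db ar S D" and wfi: "wf_ic ar S IC"
  and O: "\<forall>P\<in>set S. \<forall>t. length t = ar P \<longrightarrow> I (Orig P) t = ((P, t) \<in> set D)"
  and E1: "\<forall>P\<in>set S. \<forall>t. length t = ar P \<longrightarrow> (I (Orig P) t \<or> I (PT P) t) = I (PS P) t"
  and E2: "\<forall>P\<in>set S. \<forall>t. length t = ar P \<longrightarrow> (I (PS P) t \<and> \<not> I (PF P) t) = I (PSS P) t"
  and E3: "\<forall>P\<in>set S. \<forall>t. length t = ar P \<longrightarrow> \<not> (I (PT P) t \<and> I (PF P) t)"
  and fI: "factsS I D" and r2I: "r2S I (\<lambda>q t. \<not> I (Orig q) t) B IC" and r3I: "r3S ar S I"
  and CM: "\<nexists>Z. (factsS (hyb (concat (map (\<lambda>P. [PT P, PF P]) S)) (map PS S) Z I) D \<and>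
            r2S (hyb (concat (map (\<lambda>P. [PT P, PF P]) S)) (map PS S) Z I)
             (\<lambda>q t. \<not> hyb (concat (map (\<lambda>P. [PT P, PF P]) S)) (map PS S) Z I (Orig q) t) B IC \<and>
            r3S ar S (hyb (concat (map (\<lambda>P. [PT P, PF P]) S)) (map PS S) Z I)) \<and>
           (\<forall>P\<in>set S.
               (\<forall>t. length t = ar P \<longrightarrow> Z (PT P) t \<longrightarrow> I (PT P) t) \<and>
               (\<forall>t. length t = ar P \<longrightarrow> Z (PF P) t \<longrightarrow> I (PF P) t)) \<and>
           \<not> (\<forall>P\<in>set S.
                 (\<forall>t. length t = ar P \<longrightarrow> Z (PT P) t = I (PT P) t) \<and>
                 (\<forall>t. length t = ar P \<longrightarrow> Z (PF P) t = I (PF P) t))"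
  shows "(factsS I D \<and> r2S I (\<lambda>q t. \<not> I (Orig q) t) B IC \<and> r3S ar S I
           \<and> r4S ar S I (\<lambda>P t. \<not> I (PF P) t) \<and> r5S ar S I) \<and>
    \<not> (\<exists>X. ((\<forall>P\<in>set S.
                (\<forall>t. length t = ar P \<longrightarrow> X (Orig P) t \<longrightarrow> I (Orig P) t) \<and>
                (\<forall>t. length t = ar P \<longrightarrow> X (PT P) t \<longrightarrow> I (PT P) t) \<and>
                (\<forall>t. length t = ar P \<longrightarrow> X (PF P) t \<longrightarrow> I (PF P) t) \<and>
                (\<forall>t. length t = ar P \<longrightarrow> X (PS P) t \<longrightarrow> I (PS P) t) \<and>
                (\<forall>t. length t = ar P \<longrightarrow> X (PSS P) t \<longrightarrow> I (PSS P) t)) \<and>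
            (\<exists>P\<in>set S.
                (\<exists>t. length t = ar P \<and> I (Orig P) t \<and> \<not> X (Orig P) t) \<or>
                (\<exists>t. length t = ar P \<and> I (PT P) t \<and> \<not> X (PT P) t) \<or>
                (\<exists>t. length t = ar P \<and> I (PF P) t \<and> \<not> X (PF P) t) \<or>
                (\<exists>t. length t = ar P \<and> I (PS P) t \<and> \<not> X (PS P) t) \<or>
                (\<exists>t. length t = ar P \<and> I (PSS P) t \<and> \<not> X (PSS P) t))) \<and>
           factsS X D \<and>
           (r2S X (\<lambda>q t. \<not> X (Orig q) t \<and> \<not> I (Orig q) t) B IC \<and>
            r2S I (\<lambda>q t. \<not> I (Orig q) t) B IC) \<and>
           (r3S ar S X \<and> r3S ar S I) \<and>
           (r4S ar S X (\<lambda>P t. \<not> X (PF P) t \<and> \<not> I (PF P) t) \<and>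
            r4S ar S I (\<lambda>P t. \<not> I (PF P) t)) \<and>
           r5S ar S X \<and> r5S ar S I)"
proof -
  have r4I: "r4S ar S I (\<lambda>P t. \<not> I (PF P) t)" using E2 unfolding r4S_def by blast
  have r5I: "r5S ar S I" using E3 by (simp add: r5S_def)
  have nX: False if
    le: "\<forall>P\<in>set S.
                (\<forall>t. length t = ar P \<longrightarrow> X (Orig P) t \<longrightarrow> I (Orig P) t) \<and>
                (\<forall>t. length t = ar P \<longrightarrow> X (PT P) t \<longrightarrow> I (PT P) t) \<and>
                (\<forall>t. length t = ar P \<longrightarrow> X (PF P) t \<longrightarrow> I (PF P) t) \<and>
                (\<forall>t. length t = ar P \<longrightarrow> X (PS P) t \<longrightarrow> I (PS P) t) \<and>
                (\<forall>t. length t = ar P \<longrightarrow> X (PSS P) t \<longrightarrow> I (PSS P) t)"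
    and st: "\<exists>P\<in>set S.
                (\<exists>t. length t = ar P \<and> I (Orig P) t \<and> \<not> X (Orig P) t) \<or>
                (\<exists>t. length t = ar P \<and> I (PT P) t \<and> \<not> X (PT P) t) \<or>
                (\<exists>t. length t = ar P \<and> I (PF P) t \<and> \<not> X (PF P) t) \<or>
                (\<exists>t. length t = ar P \<and> I (PS P) t \<and> \<not> X (PS P) t) \<or>
                (\<exists>t. length t = ar P \<and> I (PSS P) t \<and> \<not> X (PSS P) t)"
    and fX: "factsS X D" and r2X: "r2S X (\<lambda>q t. \<not> X (Orig q) t \<and> \<not> I (Orig q) t) B IC"
    and r3X: "r3S ar S X" and r4X: "r4S ar S X (\<lambda>P t. \<not> X (PF P) t \<and> \<not> I (PF P) t)"
    for X
  proof -
    let ?H = "hyb (concat (map (\<lambda>P. [PT P, PF P]) S)) (map PS S) X I"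
    have XD: "X (Orig P) t" if "(P, t) \<in> set D" for P t
      using fX that unfolding factsS_def by fastforce
    have fH: "factsS ?H D" using fI by (simp add: factsS_def)
    have r2H: "r2S ?H (\<lambda>q t. \<not> ?H (Orig q) t) B IC"
      apply (rule r2S_mono[OF wfi r2X])
      subgoal for P t
      proof -
        assume P: "P \<in> set S" and len: "length t = ar P"
        have "X (Orig P) t \<longrightarrow> I (Orig P) t" using le P len by blast
        then show ?thesis using P by auto
      qed
      done
    have r3H: "r3S ar S ?H"
      unfolding r3S_def
    proof (intro ballI allI impI)
      fix P and t :: "'c list" assume P: "P \<in> set S" and len: "length t = ar P"
      have a: "X (PT P) t \<longrightarrow> X (PS P) t" using r3X P len unfolding r3S_def by blast
      have b: "I (Orig P) t \<longrightarrow> X (PS P) t" using r3X P len O XD unfolding r3S_def by blast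
      show "(?H (Orig P) t \<longrightarrow> ?H (PS P) t) \<and> (?H (PT P) t \<longrightarrow> ?H (PS P) t)" using a b P by simp
    qed
    have leZ: "\<forall>P\<in>set S.
               (\<forall>t. length t = ar P \<longrightarrow> X (PT P) t \<longrightarrow> I (PT P) t) \<and>
               (\<forall>t. length t = ar P \<longrightarrow> X (PF P) t \<longrightarrow> I (PF P) t)" using le by blast
    have eq: "\<forall>P\<in>set S.
                 (\<forall>t. length t = ar P \<longrightarrow> X (PT P) t = I (PT P) t) \<and>
                 (\<forall>t. length t = ar P \<longrightarrow> X (PF P) t = I (PF P) t)"
    proof (rule ccontr)
      assume ne: "\<not> (\<forall>P\<in>set S.
                 (\<forall>t. length t = ar P \<longrightarrow> X (PT P) t = I (PT P) t) \<and>
                 (\<forall>t. length t = ar P \<longrightarrow> X (PF P) t = I (PF P) t))"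
      show False
        apply (rule notE[OF CM])
        apply (rule exI[of _ X])
        by (intro conjI fH r2H r3H leZ ne)
    qed
    from st obtain P t where P: "P \<in> set S" and len: "length t = ar P" and
      c: "(I (Orig P) t \<and> \<not> X (Orig P) t) \<or> (I (PT P) t \<and> \<not> X (PT P) t) \<or> (I (PF P) t \<and> \<not> X (PF P) t)
        \<or> (I (PS P) t \<and> \<not> X (PS P) t) \<or> (I (PSS P) t \<and> \<not> X (PSS P) t)"
      by blast
    have eqT: "X (PT P) t = I (PT P) t" and eqF: "X (PF P) t = I (PF P) t" using eq P len by auto
    have oX: "I (Orig P) t \<Longrightarrow> X (Orig P) t" using O P len XD by blast
    have sX: "I (PS P) t \<Longrightarrow> X (PS P) t"
    proof -
      assume "I (PS P) t"
      then have "I (Orig P) t \<or> I (PT P) t" using E1 P len by blast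
      then have "X (Orig P) t \<or> X (PT P) t" using oX eqT by blast
      then show "X (PS P) t" using r3X P len by (auto simp: r3S_def)
    qed
    have ssX: "I (PSS P) t \<Longrightarrow> X (PSS P) t"
    proof -
      assume "I (PSS P) t"
      then have "I (PS P) t \<and> \<not> I (PF P) t" using E2 P len by blast
      then show "X (PSS P) t" using sX eqF r4X P len by (auto simp: r4S_def)
    qed
    show False using c oX eqT eqF sX ssX by blast
  qed
  show ?thesis
    apply (intro conjI fI r2I r3I r4I r5I notI)
    apply (elim exE conjE)
    by (rule nX; assumption)
qed

theorem proposition2:
  fixes S :: "'p list" and ar :: "'p \<Rightarrow> nat"
    and IC :: "('p, 'b, 'c::enum) ucon list" and D :: "('p \<times> 'c list) list"
    and B :: "'b \<Rightarrow> 'c list \<Rightarrow> bool" and I :: "'p rp \<Rightarrow> 'c list \<Rightarrow> bool"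
  assumes "wf_db ar S D" and "wf_ic ar S IC"
  shows "Phi_holds ar S IC D B I \<longleftrightarrow> RHS_holds ar S IC D B I"
  unfolding Phi_holds_def RHS_holds_def Circ_holds_def holds_Circ_body'
  apply (simp only: holds_Conj holds_less_fm holds_circ_psi holds_psi holds_Theta rar_def base.simps
     holds_R[OF assms(1)] holds_E1 holds_E2 holds_E3 ball_preds bex_preds ball_Ps)
  apply (rule iffI)
   apply (elim conjE)
   apply (rule dirA[OF assms]; assumption)
  apply (elim conjE)
  apply (rule dirB[OF assms]; assumption)
  done

end
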